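(* Suppose there is a finite set $C$ and a function $c:\mathcal Y\to C$ such that, for every $(a,b)\in\mathbf K$ and $y\in\mathcal Y_b$, $g(a,b,y)=h(a,b,c(y))$ for some function $h:\mathbf K\times C\to\{0,\dots,N-1\}$. For $b\in S^B$ and $\kappa\in C$, let $F_{b,\kappa}=\sum_{y\in\mathcal Y_b,\,c(y)=\kappa}P^B_y$ be the coarse-grained POVM elements. Let $\hat B$ be a register with orthonormal basis $\{|\kappa\rangle\}_{\kappa\in C}$. Define $$\hat K^B_b=\sum_{\kappa\in C}\sqrt{F_{b,\kappa}}\otimes|b\rangle_{\tilde B}\otimes|\kappa\rangle_{\hat B},\qquad \hat V=\sum_{(a,b)\in\mathbf K,\ \kappa\in C}|h(a,b,\kappa)\rangle_R\otimes|a\rangle\langle a|_{\tilde A}\otimes|b\rangle\langle b|_{\tilde B}\otimes|\kappa\rangle\langle\kappa|_{\hat B},$$ and $$\hat{\mathcal G}(\sigma)=\hat V\Pi\Big(\sum_{a,b}(K^A_a\otimes\hat K^B_b)\sigma(K^A_a\otimes\hat K^B_b)^\dagger\Big)\Pi\hat V^\dagger.$$ Then for every density operator $\rho_{AB}$ on $H_A\otimes H_B$, $$D\big(\mathcal G(\rho_{AB})\,\|\,\mathcal Z[\mathcal G(\rho_{AB})]\big)=D\big(\hat{\mathcal G}(\rho_{AB})\,\|\,\mathcal Z[\hat{\mathcal G}(\rho_{AB})]\big).$$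
   Context: Setting (reverse-reconciliation postprocessing). Registers and measurements. $H_A,H_B$ are finite-dimensional Hilbert spaces. Alice has a POVM $\{P^A_x\}_{x\in\mathcal X}$ on $H_A$, and Bob has a POVM $\{P^B_y\}_{y\in\mathcal Y}$ on $H_B$. Alice's announcement set $S^A$ gives a partition $\mathcal X=\bigcup_{a\in S^A}\mathcal X_a$ with $|\mathcal X_a|=\omega_A$ for all $a$. Bob's announcement set $S^B$ gives a partition $\mathcal Y=\bigcup_{b\in S^B}\mathcal Y_b$ with $|\mathcal Y_b|=\omega_B$ for all $b$. Fix bijections $f_a:\Omega^A=\{1,\dots,\omega_A\}\to\mathcal X_a$ and $f_b:\Omega^B=\{1,\dots,\omega_B\}\to\mathcal Y_b$. The registers $\tilde A,\tilde B,\bar A,\bar B$ have orthonormal bases $\{|a\rangle\}_{a\in S^A}$, $\{|b\rangle\}_{b\in S^B}$, $\{|\alpha\rangle\}_{\alpha\in\Omega^A}$ and $\{|\beta\rangle\}_{\beta\in\Omega^B}$ respectively. Announcement map. Define $$K^A_a=\sum_{\alpha\in\Omega^A}\sqrt{P^A_{f_a(\alpha)}}\otimes|a\rangle_{\tilde A}\otimes|\alpha\rangle_{\bar A},\qquad K^B_b=\sum_{\beta\in\Omega^B}\sqrt{P^B_{f_b(\beta)}}\otimes|b\rangle_{\tilde B}\otimes|\beta\rangle_{\bar B},$$ and $\mathcal A(\sigma)=\sum_{a\in S^A,b\in S^B}(K^A_a\otimes K^B_b)\sigma(K^A_a\otimes K^B_b)^\dagger$. Sifting. Fix a subset $\mathbf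 K\subseteq S^A\times S^B$ of kept announcements and let $\Pi=\sum_{(a,b)\in\mathbf K}|a\rangle\langle a|_{\tilde A}\otimes|b\rangle\langle b|_{\tilde B}$. Key map. Fix a key map $g:\mathbf K\times\mathcal Y\to\{0,\dots,N-1\}$. The register $R$ has orthonormal basis $\{|j\rangle\}_{j=0}^{N-1}$. Define $$V=\sum_{(a,b)\in\mathbf K,\ \beta\in\Omega^B}|g(a,b,f_b(\beta))\rangle_R\otimes|a\rangle\langle a|_{\tilde A}\otimes|b\rangle\langle b|_{\tilde B}\otimes|\beta\rangle\langle\beta|_{\bar B}.$$ Maps. $\mathcal G(\sigma)=V\Pi\mathcal A(\sigma)\Pi V^\dagger$, and $\mathcal Z(\sigma)=\sum_{j=0}^{N-1}(|j\rangle\langle j|_R\otimes\mathbb 1)\sigma(|j\rangle\langle j|_R\otimes\mathbb 1)$. Relative entropy. $D(\rho\|\sigma)=\operatorname{Tr}(\rho\log_2\rho)-\operatorname{Tr}(\rho\log_2\sigma)$, used also for subnormalized positive operators. *)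

theory Defs
  imports "HOL-Analysis.Analysis"
begin

text \<open>Finite-dimensional Hilbert spaces are modelled as complex^'n for a finite type 'n
(the type is the index set of an orthonormal basis). A linear map from complex^'n to
complex^'m is a matrix of type complex^'n^'m. Tensor products of registers correspond
to product index types; the order of the factors is fixed below.\<close>

definition adj :: "complex^'n^'m \<Rightarrow> complex^'m^'n" where
  "adj A = (\<chi> i j. cnj (A $ j $ i))"

definition cinner :: "complex^'n \<Rightarrow> complex^'n \<Rightarrow> complex" where
  "cinner u v = (\<Sum>i\<in>UNIV. cnj (u $ i) * v $ i)"

definition hermitian :: "complex^'n^'n \<Rightarrow> bool" where
  "hermitian A \<longleftrightarrow> adj A = A"

definition psd :: "complex^'n^'n \<Rightarrow> bool" where
  "psd A \<longleftrightarrow> hermitian A \<and> (\<forall>v. 0 \<le> Re (cinner v (A *v v)))"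

definition unitary :: "complex^'n^'n \<Rightarrow> bool" where
  "unitary U \<longleftrightarrow> adj U ** U = mat 1"

definition diag_mat :: "('n \<Rightarrow> real) \<Rightarrow> complex^'n^'n" where
  "diag_mat d = (\<chi> i j. if i = j then complex_of_real (d i) else 0)"

text \<open>Functional calculus for Hermitian matrices: f(A) = U diag(f(\<lambda>)) U^dagger for a
unitary diagonalisation A = U diag(\<lambda>) U^dagger (independent of the choice).\<close>
definition mfun :: "(real \<Rightarrow> real) \<Rightarrow> complex^'n^'n \<Rightarrow> complex^'n^'n" where
  "mfun f A = (SOME B. \<exists>U d. unitary U \<and> A = U ** diag_mat d ** adj U
                          \<and> B = U ** diag_mat (f \<circ> d) ** adj U)"

definition msqrt :: "complex^'n^'n \<Rightarrow> complex^'n^'n" where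
  "msqrt A = mfun sqrt A"

text \<open>Binary logarithm on the support (log 2 0 = 0 in Isabelle, so the kernel is mapped to 0).\<close>
definition mlog2 :: "complex^'n^'n \<Rightarrow> complex^'n^'n" where
  "mlog2 A = mfun (\<lambda>x. log 2 x) A"

definition rel_entropy :: "complex^'n^'n \<Rightarrow> complex^'n^'n \<Rightarrow> ereal" where
  "rel_entropy \<rho> \<sigma> =
     (if (\<forall>v. \<sigma> *v v = 0 \<longrightarrow> \<rho> *v v = 0)
      then ereal (Re (trace (\<rho> ** mlog2 \<rho>)) - Re (trace (\<rho> ** mlog2 \<sigma>)))
      else PInfty)"

definition density_op :: "complex^'n^'n \<Rightarrow> bool" where
  "density_op \<rho> \<longleftrightarrow> psd \<rho> \<and> trace \<rho> = 1"

definition povm :: "('x::finite \<Rightarrow> complex^'n^'n) \<Rightarrow> bool" where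
  "povm P \<longleftrightarrow> (\<forall>x. psd (P x)) \<and> (\<Sum>x\<in>UNIV. P x) = mat 1"

definition kron :: "complex^'n1^'m1 \<Rightarrow> complex^'n2^'m2 \<Rightarrow> complex^('n1 \<times> 'n2)^('m1 \<times> 'm2)" where
  "kron A B = (\<chi> p q. A $ fst p $ fst q * B $ snd p $ snd q)"

text \<open>A \<otimes> |x>  (as a map H \<rightarrow> H' \<otimes> X) and |x> \<otimes> A (as a map H \<rightarrow> X \<otimes> H').\<close>
definition ket_right :: "complex^'n^'m \<Rightarrow> 'x::finite \<Rightarrow> complex^'n^('m \<times> 'x)" where
  "ket_right A x = (\<chi> p j. if snd p = x then A $ fst p $ j else 0)"

definition ket_left :: "'x::finite \<Rightarrow> complex^'n^'m \<Rightarrow> complex^'n^('x \<times> 'm)" where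
  "ket_left x A = (\<chi> p j. if fst p = x then A $ snd p $ j else 0)"

definition proj :: "'x::finite \<Rightarrow> complex^'x^'x" where
  "proj x = (\<chi> i j. if i = x \<and> j = x then 1 else 0)"

definition ann_kraus :: "('s::finite \<Rightarrow> 'o::finite \<Rightarrow> complex^'h^'h) \<Rightarrow> 's \<Rightarrow> complex^'h^(('h \<times> 's) \<times> 'o)" where
  "ann_kraus Q s = (\<Sum>w\<in>UNIV. ket_right (ket_right (msqrt (Q s w)) s) w)"

definition ann_map ::
  "('sa::finite \<Rightarrow> 'oa::finite \<Rightarrow> complex^'ha^'ha) \<Rightarrow> ('sb::finite \<Rightarrow> 'ob::finite \<Rightarrow> complex^'hb^'hb)
   \<Rightarrow> complex^('ha \<times> 'hb)^('ha \<times> 'hb)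
   \<Rightarrow> complex^((('ha \<times> 'sa) \<times> 'oa) \<times> (('hb \<times> 'sb) \<times> 'ob))^((('ha \<times> 'sa) \<times> 'oa) \<times> (('hb \<times> 'sb) \<times> 'ob))" where
  "ann_map QA QB \<sigma> = (\<Sum>a\<in>UNIV. \<Sum>b\<in>UNIV.
      kron (ann_kraus QA a) (ann_kraus QB b) ** \<sigma> ** adj (kron (ann_kraus QA a) (ann_kraus QB b)))"

definition sift_proj :: "('sa::finite \<times> 'sb::finite) set
   \<Rightarrow> complex^((('ha::finite \<times> 'sa) \<times> 'oa::finite) \<times> (('hb::finite \<times> 'sb) \<times> 'ob::finite))^((('ha \<times> 'sa) \<times> 'oa) \<times> (('hb \<times> 'sb) \<times> 'ob))" where
  "sift_proj Ks = (\<Sum>(a,b)\<in>Ks. kron (kron (kron (mat 1) (proj a)) (mat 1))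
                                   (kron (kron (mat 1) (proj b)) (mat 1)))"

definition key_op :: "('sa::finite \<times> 'sb::finite) set \<Rightarrow> ('sa \<Rightarrow> 'sb \<Rightarrow> 'ob::finite \<Rightarrow> 'r::finite)
   \<Rightarrow> complex^((('ha::finite \<times> 'sa) \<times> 'oa::finite) \<times> (('hb::finite \<times> 'sb) \<times> 'ob))^('r \<times> ((('ha \<times> 'sa) \<times> 'oa) \<times> (('hb \<times> 'sb) \<times> 'ob)))" where
  "key_op Ks k = (\<Sum>(a,b)\<in>Ks. \<Sum>w\<in>UNIV. ket_left (k a b w)
        (kron (kron (kron (mat 1) (proj a)) (mat 1)) (kron (kron (mat 1) (proj b)) (proj w))))"

definition G_map ::
  "('sa::finite \<Rightarrow> 'oa::finite \<Rightarrow> complex^'ha^'ha) \<Rightarrow> ('sb::finite \<Rightarrow> 'ob::finite \<Rightarrow> complex^'hb^'hb)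
   \<Rightarrow> ('sa \<times> 'sb) set \<Rightarrow> ('sa \<Rightarrow> 'sb \<Rightarrow> 'ob \<Rightarrow> 'r::finite)
   \<Rightarrow> complex^('ha \<times> 'hb)^('ha \<times> 'hb)
   \<Rightarrow> complex^('r \<times> ((('ha \<times> 'sa) \<times> 'oa) \<times> (('hb \<times> 'sb) \<times> 'ob)))^('r \<times> ((('ha \<times> 'sa) \<times> 'oa) \<times> (('hb \<times> 'sb) \<times> 'ob)))" where
  "G_map QA QB Ks k \<sigma> =
     key_op Ks k ** sift_proj Ks ** ann_map QA QB \<sigma> ** sift_proj Ks ** adj (key_op Ks k)"

definition Z_map :: "complex^('r::finite \<times> 'm::finite)^('r \<times> 'm) \<Rightarrow> complex^('r \<times> 'm)^('r \<times> 'm)" where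
  "Z_map \<sigma> = (\<Sum>j\<in>UNIV. kron (proj j) (mat 1) ** \<sigma> ** kron (proj j) (mat 1))"

end

theory Submission
  imports Defs
begin


lemma sum_UNIV_prod: "sum f (UNIV :: ('a::finite \<times> 'b::finite) set) = (\<Sum>a\<in>UNIV. \<Sum>b\<in>UNIV. f (a,b))"
  by (simp add: sum.cartesian_product UNIV_Times_UNIV[symmetric] del: UNIV_Times_UNIV)

lemma adj_entry[simp]: "adj A $ i $ j = cnj (A $ j $ i)"
  by (simp add: adj_def)

lemma adj_adj[simp]: "adj (adj A) = A"
  by (simp add: vec_eq_iff)

lemma adj_mult: "adj (A ** B) = adj B ** adj A"
  by (simp add: vec_eq_iff matrix_matrix_mult_def mult.commute)

lemma adj_add: "adj (A + B) = adj A + adj B"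
  by (simp add: vec_eq_iff)

lemma adj_sum: "adj (sum f S) = sum (\<lambda>x. adj (f x)) S"
  by (induct S rule: infinite_finite_induct) (auto simp: adj_add vec_eq_iff adj_def)

lemma adj_zero[simp]: "adj 0 = 0"
  by (simp add: vec_eq_iff)

lemma adj_mat[simp]: "adj (mat 1) = mat 1"
  by (simp add: vec_eq_iff mat_def)

lemma matrix_add_rdistrib: "((B + C) ** A) = (B ** A) + (C ** A)"
  by (vector matrix_matrix_mult_def sum.distrib[symmetric] field_simps)

lemma matrix_mult_sum_right: "A ** sum f S = sum (\<lambda>x. A ** f x) S"
  by (induct S rule: infinite_finite_induct) (auto simp: matrix_add_ldistrib)

lemma matrix_mult_sum_left: "sum f S ** A = sum (\<lambda>x. f x ** A) S"
  by (induct S rule: infinite_finite_induct) (auto simp: matrix_add_rdistrib)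

lemma cinner_add_right: "cinner u (v + w) = cinner u v + cinner u w"
  by (simp add: cinner_def sum.distrib algebra_simps)
lemma cinner_add_left: "cinner (v + w) u = cinner v u + cinner w u"
  by (simp add: cinner_def sum.distrib algebra_simps)
lemma cinner_diff_right: "cinner u (v - w) = cinner u v - cinner u w"
  by (simp add: cinner_def sum_subtractf algebra_simps)
lemma cinner_diff_left: "cinner (v - w) u = cinner v u - cinner w u"
  by (simp add: cinner_def sum_subtractf algebra_simps)
lemma cinner_scale_right: "cinner u (c *s v) = c * cinner u v"
  by (simp add: cinner_def sum_distrib_left algebra_simps)
lemma cinner_scale_left: "cinner (c *s v) u = cnj c * cinner v u"
  by (simp add: cinner_def sum_distrib_left algebra_simps)
lemma cinner_zero_right[simp]: "cinner u 0 = 0" by (simp add: cinner_def)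
lemma cinner_zero_left[simp]: "cinner 0 u = 0" by (simp add: cinner_def)
lemma cinner_cnj: "cnj (cinner u v) = cinner v u"
  by (simp add: cinner_def mult.commute)
lemma cinner_sum_right: "cinner u (sum f S) = (\<Sum>x\<in>S. cinner u (f x))"
  by (induct S rule: infinite_finite_induct) (auto simp: cinner_add_right)
lemma cinner_sum_left: "cinner (sum f S) u = (\<Sum>x\<in>S. cinner (f x) u)"
  by (induct S rule: infinite_finite_induct) (auto simp: cinner_add_left)

lemma cinner_adj: "cinner u (A *v v) = cinner (adj A *v u) v"
proof -
  have "cinner u (A *v v) = (\<Sum>i\<in>UNIV. \<Sum>j\<in>UNIV. cnj (u$i) * (A$i$j * v$j))"
    by (simp add: cinner_def matrix_vector_mult_def sum_distrib_left)
  also have "\<dots> = (\<Sum>j\<in>UNIV. \<Sum>i\<in>UNIV. cnj (u$i) * (A$i$j * v$j))"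
    by (rule sum.swap)
  also have "\<dots> = cinner (adj A *v u) v"
    by (simp add: cinner_def matrix_vector_mult_def sum_distrib_right mult.assoc mult.left_commute)
  finally show ?thesis .
qed

lemma cinner_self: "cinner v v = of_real ((norm v)^2)"
proof -
  have "cinner v v = (\<Sum>i\<in>UNIV. of_real ((norm (v$i))^2))"
    unfolding cinner_def by (intro sum.cong refl) (metis complex_norm_square mult.commute)
  also have "\<dots> = of_real ((norm v)^2)"
    by (simp add: norm_vec_def L2_set_def sum_nonneg)
  finally show ?thesis .
qed

lemma cinner_self_zero: "cinner v v = 0 \<longleftrightarrow> v = 0"
  by (simp add: cinner_self)

lemma hermitian_adj: "hermitian A \<Longrightarrow> adj A = A" by (simp add: hermitian_def)

lemma hermitian_cinner: "hermitian A \<Longrightarrow> cinner u (A *v v) = cinner (A *v u) v"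
  by (simp add: cinner_adj hermitian_def)

lemma hermitian_cinner_real: "hermitian A \<Longrightarrow> cinner v (A *v v) = of_real (Re (cinner v (A *v v)))"
proof -
  assume h: "hermitian A"
  have "cnj (cinner v (A *v v)) = cinner v (A *v v)"
    using h by (simp add: cinner_cnj hermitian_cinner)
  then have "Im (cinner v (A *v v)) = 0" by (simp add: complex_eq_iff)
  then show ?thesis by (simp add: complex_eq_iff)
qed

lemma mat1_entry: "mat 1 $ i $ j = (if i = j then 1 else 0)" by (simp add: mat_def)

lemma diag_mult: "diag_mat d1 ** diag_mat d2 = diag_mat (\<lambda>i. d1 i * d2 i)"
proof -
  have "(\<Sum>k\<in>UNIV. (if i = k then complex_of_real (d1 i) else 0) * (if k = j then complex_of_real (d2 k) else 0))
     = (if i = j then complex_of_real (d1 i * d2 i) else 0)" for i j :: 'a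
  proof -
    have "(\<Sum>k\<in>UNIV. (if i = k then complex_of_real (d1 i) else 0) * (if k = j then complex_of_real (d2 k) else 0))
       = (\<Sum>k\<in>UNIV. if k = i then (if i = j then complex_of_real (d1 i * d2 i) else 0) else 0)"
      by (intro sum.cong refl) auto
    also have "\<dots> = (if i = j then complex_of_real (d1 i * d2 i) else 0)" by simp
    finally show ?thesis .
  qed
  then show ?thesis by (simp add: vec_eq_iff matrix_matrix_mult_def diag_mat_def)
qed

lemma adj_diag[simp]: "adj (diag_mat d) = diag_mat d"
  by (simp add: vec_eq_iff diag_mat_def)

lemma diag_one: "diag_mat (\<lambda>i. 1) = mat 1"
  by (simp add: vec_eq_iff diag_mat_def mat_def)

lemma diag_add: "diag_mat d1 + diag_mat d2 = diag_mat (\<lambda>i. d1 i + d2 i)"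
  by (simp add: vec_eq_iff diag_mat_def)

lemma unitary_right: "unitary U \<Longrightarrow> U ** adj U = mat 1"
  by (simp add: unitary_def matrix_left_right_inverse)

lemma adj_zero_iff: "adj N ** N = 0 \<Longrightarrow> N = 0"
proof -
  assume h: "adj N ** N = 0"
  have "\<forall>x. N *v x = 0"
  proof
    fix x
    have "cinner (N *v x) (N *v x) = cinner x (adj N *v (N *v x))"
      using cinner_adj[of x "adj N" "N *v x"] by simp
    also have "\<dots> = cinner x ((adj N ** N) *v x)"
      by (simp add: matrix_vector_mul_assoc)
    finally have "cinner (N *v x) (N *v x) = 0" using h by simp
    then show "N *v x = 0" using cinner_self_zero by blast
  qed
  then show "N = 0" by (simp add: matrix_eq)
qed


definition orthon :: "(complex^'n) set \<Rightarrow> bool" where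
  "orthon S \<longleftrightarrow> (\<forall>s\<in>S. \<forall>t\<in>S. cinner s t = (if s = t then 1 else 0))"

lemma orthon_indep:
  assumes fin: "finite S" and on: "orthon S"
  shows "vec.independent S"
proof (rule vec.independent_if_scalars_zero[OF fin])
  fix f x assume sum0: "(\<Sum>y\<in>S. f y *s y) = 0" and x: "x \<in> S"
  have "0 = cinner x (\<Sum>y\<in>S. f y *s y)" using sum0 by simp
  also have "\<dots> = (\<Sum>y\<in>S. f y * cinner x y)" by (simp add: cinner_sum_right cinner_scale_right)
  also have "\<dots> = (\<Sum>y\<in>S. if y = x then f y else 0)"
    using on x unfolding orthon_def by (intro sum.cong refl) auto
  also have "\<dots> = f x" using x fin by simp
  finally show "f x = 0" by simp
qed

lemma exists_orth:
  assumes fin: "finite S" and on: "orthon (S :: (complex^'n) set)" and card: "card S < CARD('n)"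
  shows "\<exists>u. u \<noteq> 0 \<and> (\<forall>s\<in>S. cinner s u = 0)"
proof -
  have ind: "vec.independent S" by (rule orthon_indep[OF fin on])
  have "vec.span S \<noteq> UNIV"
  proof
    assume "vec.span S = UNIV"
    then have "vec.dim (UNIV :: (complex^'n) set) = card S"
      using vec.dim_span_eq_card_independent[OF ind] by simp
    moreover have "vec.dim (UNIV :: (complex^'n) set) = CARD('n)"
      by (simp add: card_cart_basis)
    ultimately show False using card by simp
  qed
  then obtain x where x: "x \<notin> vec.span S" by auto
  define y where "y = x - (\<Sum>s\<in>S. cinner s x *s s)"
  have orth: "\<forall>t\<in>S. cinner t y = 0"
  proof
    fix t assume t: "t \<in> S"
    have "cinner t y = cinner t x - (\<Sum>s\<in>S. cinner s x * cinner t s)"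
      by (simp add: y_def cinner_diff_right cinner_sum_right cinner_scale_right)
    also have "(\<Sum>s\<in>S. cinner s x * cinner t s) = (\<Sum>s\<in>S. if s = t then cinner s x else 0)"
      using on t unfolding orthon_def by (intro sum.cong refl) auto
    also have "\<dots> = cinner t x" using t fin by (simp add: sum.delta')
    finally show "cinner t y = 0" by simp
  qed
  have "y \<noteq> 0"
  proof
    assume "y = 0"
    then have "x = (\<Sum>s\<in>S. cinner s x *s s)" by (simp add: y_def)
    moreover have "(\<Sum>s\<in>S. cinner s x *s s) \<in> vec.span S"
      by (intro vec.span_sum vec.span_scale vec.span_base)
    ultimately show False using x by simp
  qed
  then show ?thesis using orth by blast
qed



lemma cinner_cont: "continuous_on UNIV (\<lambda>x::complex^'n. cinner s x)"
  unfolding cinner_def by (intro continuous_intros)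

lemma cinner_self_cont: "continuous_on UNIV (\<lambda>x::complex^'n. cinner x x)"
  unfolding cinner_def by (intro continuous_intros)

lemma cinner_A_cont: "continuous_on UNIV (\<lambda>x::complex^'n. Re (cinner x (A *v x)))"
  unfolding cinner_def matrix_vector_mult_def by (intro continuous_intros)

lemma quad_nonpos_zero:
  fixes a b :: real
  assumes "\<forall>t. 2 * t * a + t^2 * b \<le> 0" and "a \<ge> 0"
  shows "a = 0"
proof (rule ccontr)
  assume "a \<noteq> 0"
  then have a: "a > 0" using assms(2) by simp
  define t where "t = a / (\<bar>b\<bar> + 1)"
  have tpos: "t > 0" using a by (simp add: t_def)
  have "t * (\<bar>b\<bar> + 1) = a" by (simp add: t_def)
  have "t^2 * b \<ge> - (t^2 * \<bar>b\<bar>)" using mult_left_mono[of "-\<bar>b\<bar>" b "t^2"] by simp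
  have "t * \<bar>b\<bar> \<le> a" using \<open>t * (\<bar>b\<bar> + 1) = a\<close> tpos by (simp add: algebra_simps)
  then have "t^2 * \<bar>b\<bar> \<le> t * a" using tpos by (simp add: power2_eq_square mult.assoc mult_left_mono)
  then have "2 * t * a + t^2 * b \<ge> t * a" using \<open>t^2 * b \<ge> - (t^2 * \<bar>b\<bar>)\<close> by linarith
  moreover have "t * a > 0" using tpos a by simp
  ultimately show False using assms(1) by (smt (verit))
qed

lemma exists_eig:
  fixes A :: "complex^'n^'n"
  assumes herm: "hermitian A" and fin: "finite S" and on: "orthon S"
    and eig: "\<forall>s\<in>S. \<exists>\<mu>::real. A *v s = complex_of_real \<mu> *s s"
    and card: "card S < CARD('n)"
  shows "\<exists>u \<mu>. cinner u u = 1 \<and> (\<forall>s\<in>S. cinner s u = 0) \<and> A *v u = complex_of_real \<mu> *s u"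
proof -
  define Ov where "Ov = {x::complex^'n. \<forall>s\<in>S. cinner s x = 0}"
  define K where "K = {x\<in>Ov. cinner x x = 1}"
  define q where "q x = Re (cinner x (A *v x))" for x
  have Ov_add: "x + y \<in> Ov" if "x \<in> Ov" "y \<in> Ov" for x y
    using that by (simp add: Ov_def cinner_add_right)
  have Ov_diff: "x - y \<in> Ov" if "x \<in> Ov" "y \<in> Ov" for x y
    using that by (simp add: Ov_def cinner_diff_right)
  have Ov_scale: "c *s x \<in> Ov" if "x \<in> Ov" for x c
    using that by (simp add: Ov_def cinner_scale_right)
  have Ov_A: "A *v x \<in> Ov" if "x \<in> Ov" for x
  proof -
    have "cinner s (A *v x) = 0" if s: "s \<in> S" for s
    proof -
      obtain \<mu> :: real where mu: "A *v s = complex_of_real \<mu> *s s" using eig s by blast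
      have "cinner s (A *v x) = cinner (A *v s) x" by (rule hermitian_cinner[OF herm])
      also have "\<dots> = complex_of_real \<mu> * cinner s x" by (simp add: mu cinner_scale_left)
      also have "\<dots> = 0" using \<open>x \<in> Ov\<close> s by (simp add: Ov_def)
      finally show ?thesis .
    qed
    then show ?thesis by (simp add: Ov_def)
  qed
  obtain u0 where u0: "u0 \<noteq> 0" "\<forall>s\<in>S. cinner s u0 = 0" using exists_orth[OF fin on card] by blast
  have "K \<noteq> {}"
  proof -
    define c where "c = complex_of_real (1 / norm u0)"
    have cO: "c *s u0 \<in> Ov" using u0 by (intro Ov_scale) (simp add: Ov_def)
    have "cinner (c *s u0) (c *s u0) = cnj c * (c * cinner u0 u0)"
      by (simp add: cinner_scale_left cinner_scale_right)
    also have "\<dots> = 1" using u0 by (simp add: c_def cinner_self power2_eq_square)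
    finally have "cinner (c *s u0) (c *s u0) = 1" .
    then show ?thesis using cO by (auto simp: K_def)
  qed
  have "compact K"
  proof -
    have "closed Ov"
    proof -
      have "Ov = (\<Inter>s\<in>S. {x. cinner s x = 0})" by (auto simp: Ov_def)
      moreover have "closed {x::complex^'n. cinner s x = 0}" for s
        using cinner_cont[of s] by (intro closed_Collect_eq) (auto intro: continuous_intros)
      ultimately show ?thesis by auto
    qed
    moreover have "closed {x::complex^'n. cinner x x = 1}"
      using cinner_self_cont by (intro closed_Collect_eq) (auto intro: continuous_intros)
    ultimately have "closed K" unfolding K_def by (simp add: Collect_conj_eq closed_Int Int_def[symmetric])
    moreover have "bounded K"
    proof -
      have "K \<subseteq> cball 0 1"
      proof
        fix x assume "x \<in> K"
        then have "complex_of_real ((norm x)^2) = 1" by (simp add: K_def cinner_self)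
        then have "(norm x)^2 = 1" by (metis of_real_eq_1_iff)
        then have "norm x = 1" using norm_ge_zero[of x] by (auto simp: power2_eq_1_iff)
        then show "x \<in> cball 0 1" by simp
      qed
      then show ?thesis using bounded_cball bounded_subset by blast
    qed
    ultimately show ?thesis by (simp add: compact_eq_bounded_closed)
  qed
  moreover have "continuous_on K q"
    unfolding q_def using cinner_A_cont[of A] continuous_on_subset by blast
  ultimately obtain v where v: "v \<in> K" and vmax: "\<forall>y\<in>K. q y \<le> q v"
    using continuous_attains_sup[OF _ \<open>K \<noteq> {}\<close>] by blast
  define l where "l = q v"
  have vO: "v \<in> Ov" and vv: "cinner v v = 1" using v by (auto simp: K_def)
  have bound: "q x \<le> l * Re (cinner x x)" if x: "x \<in> Ov" for x
  proof (cases "x = 0")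
    case True then show ?thesis by (simp add: q_def l_def)
  next
    case False
    define r where "r = (norm x)^2"
    have rpos: "r > 0" using False by (simp add: r_def)
    have sr: "sqrt r = norm x" by (simp add: r_def)
    define y where "y = complex_of_real (1 / sqrt r) *s x"
    have "cinner y y = complex_of_real (1 / sqrt r) * (complex_of_real (1 / sqrt r) * cinner x x)"
      by (simp add: y_def cinner_scale_left cinner_scale_right)
    also have "\<dots> = 1" using False by (simp add: cinner_self sr power2_eq_square)
    finally have cyy: "cinner y y = 1" .
    have "y \<in> K" using cyy x by (simp add: K_def y_def Ov_scale)
    then have "q y \<le> l" using vmax by (simp add: l_def)
    moreover
    have "cinner y (A *v y) = complex_of_real (1 / sqrt r) * (complex_of_real (1 / sqrt r) * cinner x (A *v x))"
      by (simp add: y_def cinner_scale_left cinner_scale_right vec.scale)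
    then have "q y = q x / r"
      using False by (simp add: q_def sr r_def power2_eq_square)
    ultimately have "q x \<le> l * r" using rpos by (simp add: divide_le_eq mult.commute)
    then show ?thesis by (simp add: cinner_self r_def)
  qed
  define w where "w = A *v v - complex_of_real l *s v"
  have wO: "w \<in> Ov" unfolding w_def using Ov_A[OF vO] Ov_scale[OF vO]
    by (rule Ov_diff)
  have Avv: "cinner v (A *v v) = complex_of_real l"
    using hermitian_cinner_real[OF herm, of v] by (simp add: l_def q_def)
  have key: "2 * t * Re (cinner w w) + t^2 * (q w - l * Re (cinner w w)) \<le> 0" for t :: real
  proof -
    define x where "x = v + complex_of_real t *s w"
    have xO: "x \<in> Ov" using vO wO by (simp add: x_def Ov_add Ov_scale)
    have e1: "cinner x (A *v x) = cinner v (A *v v) + complex_of_real t * (cinner v (A *v w) + cinner w (A *v v))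
        + complex_of_real (t^2) * cinner w (A *v w)"
      by (simp add: x_def matrix_vector_right_distrib vec.scale cinner_add_left cinner_add_right
          cinner_scale_left cinner_scale_right algebra_simps power2_eq_square)
    have e2: "cinner x x = cinner v v + complex_of_real t * (cinner v w + cinner w v)
        + complex_of_real (t^2) * cinner w w"
      by (simp add: x_def cinner_add_left cinner_add_right
          cinner_scale_left cinner_scale_right algebra_simps power2_eq_square)
    have "cinner v (A *v w) = cnj (cinner w (A *v v))"
      by (simp add: hermitian_cinner[OF herm] cinner_cnj)
    then have h1: "Re (cinner v (A *v w)) = Re (cinner w (A *v v))" by simp
    have "cinner v w = cnj (cinner w v)" by (simp add: cinner_cnj)
    then have h2: "Re (cinner v w) = Re (cinner w v)" by simp
    have h3: "cinner w w = cinner w (A *v v) - complex_of_real l * cinner w v"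
      by (simp add: w_def cinner_diff_right cinner_scale_right)
    have "q x \<le> l * Re (cinner x x)" by (rule bound[OF xO])
    then have ineq: "l + 2 * t * Re (cinner w (A *v v)) + t^2 * q w
             \<le> l * (1 + 2 * t * Re (cinner w v) + t^2 * Re (cinner w w))"
      unfolding q_def e1 e2 using Avv vv h1 h2 by (simp add: algebra_simps)
    have hP: "Re (cinner w (A *v v)) = Re (cinner w w) + l * Re (cinner w v)"
      using h3 by simp
    from ineq show ?thesis unfolding hP by (simp add: algebra_simps)
  qed
  have "Re (cinner w w) = 0"
    by (rule quad_nonpos_zero[OF allI[OF key]]) (simp add: cinner_self)
  then have "w = 0" by (simp add: cinner_self)
  then have "A *v v = complex_of_real l *s v" by (simp add: w_def)
  then show ?thesis using vv vO by (auto simp: Ov_def)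
qed


lemma orth_eig_family:
  fixes A :: "complex^'n^'n"
  assumes herm: "hermitian A"
  shows "k \<le> CARD('n) \<Longrightarrow> \<exists>S. finite S \<and> card S = k \<and> orthon S \<and>
           (\<forall>s\<in>S. \<exists>\<mu>::real. A *v s = complex_of_real \<mu> *s s)"
proof (induction k)
  case 0
  show ?case by (rule exI[of _ "{}"]) (simp add: orthon_def)
next
  case (Suc k)
  then obtain S where S: "finite S" "card S = k" "orthon S" "\<forall>s\<in>S. \<exists>\<mu>::real. A *v s = complex_of_real \<mu> *s s"
    by auto
  obtain u \<mu> where u: "cinner u u = 1" "\<forall>s\<in>S. cinner s u = 0" "A *v u = complex_of_real \<mu> *s u"
    using exists_eig[OF herm S(1) S(3) S(4)] S(2) Suc.prems by auto
  have uS: "u \<notin> S" using u by auto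
  have us: "cinner u s = 0" if "s \<in> S" for s
    using u(2) that cinner_cnj[of s u] by simp
  have "orthon (insert u S)"
    using S(3) u(1,2) us uS unfolding orthon_def by auto
  moreover have "card (insert u S) = Suc k" using S uS by simp
  ultimately show ?case using S u by (intro exI[of _ "insert u S"]) auto
qed

lemma spectral:
  fixes A :: "complex^'n^'n"
  assumes herm: "hermitian A"
  shows "\<exists>U d. unitary U \<and> A = U ** diag_mat d ** adj U"
proof -
  obtain S where S: "finite S" "card S = CARD('n)" "orthon S"
      "\<forall>s\<in>S. \<exists>\<mu>::real. A *v s = complex_of_real \<mu> *s s"
    using orth_eig_family[OF herm, of "CARD('n)"] by auto
  obtain e where e: "bij_betw e (UNIV::'n set) S"
    using finite_same_card_bij[of "UNIV::'n set" S] S by auto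
  have eS: "e j \<in> S" for j using e by (auto simp: bij_betw_def)
  have einj: "e i = e j \<longleftrightarrow> i = j" for i j using e by (auto simp: bij_betw_def inj_on_def)
  define d where "d j = (SOME \<mu>::real. A *v e j = complex_of_real \<mu> *s e j)" for j
  have d: "A *v e j = complex_of_real (d j) *s e j" for j
    unfolding d_def by (rule someI_ex) (use S(4) eS in blast)
  define U :: "complex^'n^'n" where "U = (\<chi> i j. e j $ i)"
  have "adj U ** U = mat 1"
  proof -
    have "(adj U ** U) $ i $ j = cinner (e i) (e j)" for i j
      by (simp add: matrix_matrix_mult_def U_def cinner_def)
    also have "cinner (e i) (e j) = (if i = j then 1 else 0)" for i j
      using S(3) eS einj unfolding orthon_def by auto
    finally show ?thesis by (simp add: vec_eq_iff mat_def)
  qed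
  then have uni: "unitary U" by (simp add: unitary_def)
  have AU: "A ** U = U ** diag_mat d"
  proof -
    have "(A ** U) $ i $ j = (A *v e j) $ i" for i j
      by (simp add: matrix_matrix_mult_def matrix_vector_mult_def U_def)
    also have "(A *v e j) $ i = e j $ i * complex_of_real (d j)" for i j
      by (simp add: d mult.commute)
    also have "e j $ i * complex_of_real (d j) = (U ** diag_mat d) $ i $ j" for i j
    proof -
      have "(U ** diag_mat d) $ i $ j = (\<Sum>k\<in>UNIV. e k $ i * (if k = j then complex_of_real (d k) else 0))"
        by (simp add: matrix_matrix_mult_def diag_mat_def U_def)
      also have "\<dots> = (\<Sum>k\<in>UNIV. if k = j then e j $ i * complex_of_real (d j) else 0)"
        by (intro sum.cong refl) auto
      finally show ?thesis by simp
    qed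
    finally show ?thesis by (simp add: vec_eq_iff)
  qed
  have "A = A ** (U ** adj U)" using unitary_right[OF uni] by simp
  also have "\<dots> = U ** diag_mat d ** adj U" by (simp add: matrix_mul_assoc AU)
  finally show ?thesis using uni by blast
qed


lemma diag_mat_vec: "(diag_mat d *v w) $ i = complex_of_real (d i) * w $ i"
proof -
  have "(diag_mat d *v w) $ i = (\<Sum>k\<in>UNIV. (if i = k then complex_of_real (d i) else 0) * w $ k)"
    by (simp add: matrix_vector_mult_def diag_mat_def)
  also have "\<dots> = (\<Sum>k\<in>UNIV. if k = i then complex_of_real (d i) * w $ i else 0)"
    by (intro sum.cong refl) auto
  finally show ?thesis by simp
qed

lemma unitary_left: "unitary U \<Longrightarrow> adj U ** U = mat 1" by (simp add: unitary_def)

lemma decomp_hermitian: "A = U ** diag_mat d ** adj U \<Longrightarrow> hermitian A"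
  by (simp add: hermitian_def adj_mult matrix_mul_assoc)

lemma decomp_eig:
  assumes U: "unitary U" and A: "A = U ** diag_mat d ** adj U"
    and ev: "A *v v = complex_of_real \<mu> *s v"
  shows "(U ** diag_mat (f \<circ> d) ** adj U) *v v = complex_of_real (f \<mu>) *s v"
proof -
  define w where "w = adj U *v v"
  have "adj U *v (A *v v) = diag_mat d *v w"
    by (simp add: A w_def matrix_vector_mul_assoc matrix_mul_assoc unitary_left[OF U])
  then have dw: "diag_mat d *v w = complex_of_real \<mu> *s w"
    by (simp add: ev w_def vec.scale)
  have comp: "w $ i = 0 \<or> d i = \<mu>" for i
  proof -
    have "complex_of_real (d i) * w $ i = complex_of_real \<mu> * w $ i"
      using arg_cong[OF dw, of "\<lambda>x. x $ i"] by (simp add: diag_mat_vec)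
    then show ?thesis by auto
  qed
  have "diag_mat (f \<circ> d) *v w = complex_of_real (f \<mu>) *s w"
    using comp by (auto simp: vec_eq_iff diag_mat_vec)
  then have "(U ** diag_mat (f \<circ> d) ** adj U) *v v = complex_of_real (f \<mu>) *s (U *v w)"
    by (simp add: w_def matrix_vector_mul_assoc[symmetric] vec.scale)
  also have "U *v w = v" by (simp add: w_def matrix_vector_mul_assoc unitary_right[OF U])
  finally show ?thesis .
qed

lemma eig_col:
  assumes U: "unitary U" and A: "A = U ** diag_mat d ** adj U"
  shows "A *v (U *v axis j 1) = complex_of_real (d j) *s (U *v axis j 1)"
proof -
  have "A ** U = U ** diag_mat d"
    by (simp add: A matrix_mul_assoc[symmetric] unitary_left[OF U])
  then have "A *v (U *v axis j 1) = U *v (diag_mat d *v axis j 1)"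
    by (simp add: matrix_vector_mul_assoc)
  also have "diag_mat d *v axis j 1 = complex_of_real (d j) *s axis j (1::complex)"
    by (auto simp: vec_eq_iff diag_mat_vec axis_def)
  finally show ?thesis by (simp add: vec.scale)
qed

lemma eig_determines:
  fixes A :: "complex^'n^'n"
  assumes herm: "hermitian A"
    and B: "\<And>v \<mu>. A *v v = complex_of_real \<mu> *s v \<Longrightarrow> B *v v = complex_of_real (f \<mu>) *s v"
    and B': "\<And>v \<mu>. A *v v = complex_of_real \<mu> *s v \<Longrightarrow> B' *v v = complex_of_real (f \<mu>) *s v"
  shows "B = B'"
proof -
  obtain U d where U: "unitary U" and A: "A = U ** diag_mat d ** adj U"
    using spectral[OF herm] by blast
  have col: "B *v (U *v axis j 1) = B' *v (U *v axis j 1)" for j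
    using B[OF eig_col[OF U A]] B'[OF eig_col[OF U A]] by simp
  have "B ** U = B' ** U"
  proof (subst matrix_eq, intro allI)
    fix x :: "complex^'n"
    have "(B ** U) *v x = B *v (U *v (\<Sum>j\<in>UNIV. x $ j *s axis j 1))"
      by (simp add: basis_expansion matrix_vector_mul_assoc)
    also have "\<dots> = (\<Sum>j\<in>UNIV. x $ j *s (B *v (U *v axis j 1)))"
      by (simp add: vec.sum vec.scale)
    also have "\<dots> = (\<Sum>j\<in>UNIV. x $ j *s (B' *v (U *v axis j 1)))"
      by (simp add: col)
    also have "\<dots> = B' *v (U *v (\<Sum>j\<in>UNIV. x $ j *s axis j 1))"
      by (simp add: vec.sum vec.scale)
    also have "\<dots> = (B' ** U) *v x"
      by (simp add: basis_expansion matrix_vector_mul_assoc)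
    finally show "(B ** U) *v x = (B' ** U) *v x" .
  qed
  then have "B ** U ** adj U = B' ** U ** adj U" by simp
  then show ?thesis by (simp add: matrix_mul_assoc[symmetric] unitary_right[OF U])
qed

lemma mfun_char:
  assumes herm: "hermitian A" and ev: "A *v v = complex_of_real \<mu> *s v"
  shows "mfun f A *v v = complex_of_real (f \<mu>) *s v"
proof -
  obtain U0 d0 where "unitary U0" "A = U0 ** diag_mat d0 ** adj U0"
    using spectral[OF herm] by blast
  then have ex: "\<exists>B U d. unitary U \<and> A = U ** diag_mat d ** adj U \<and> B = U ** diag_mat (f \<circ> d) ** adj U"
    by blast
  obtain U d where U: "unitary U" "A = U ** diag_mat d ** adj U" "mfun f A = U ** diag_mat (f \<circ> d) ** adj U"
    using someI_ex[OF ex] unfolding mfun_def by blast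
  show ?thesis using decomp_eig[OF U(1,2) ev] U(3) by simp
qed

lemma mfun_eqI:
  assumes herm: "hermitian A"
    and B: "\<And>v \<mu>. A *v v = complex_of_real \<mu> *s v \<Longrightarrow> B *v v = complex_of_real (f \<mu>) *s v"
  shows "mfun f A = B"
  using eig_determines[of A "mfun f A" f B, OF herm] mfun_char[OF herm] B by blast

lemma mfun_decomp:
  assumes U: "unitary U" and A: "A = U ** diag_mat d ** adj U"
  shows "mfun f A = U ** diag_mat (f \<circ> d) ** adj U"
  by (rule mfun_eqI[OF decomp_hermitian[OF A] decomp_eig[OF U A]])

lemma mfun_hermitian: "hermitian A \<Longrightarrow> hermitian (mfun f A)"
  using spectral[of A] mfun_decomp decomp_hermitian by metis

lemma mfun_conj:
  fixes W :: "complex^'n^'m"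
  assumes herm: "hermitian X" and f0: "f 0 = 0" and WX: "adj W ** W ** X = X"
  shows "mfun f (W ** X ** adj W) = W ** mfun f X ** adj W"
proof (rule mfun_eqI)
  show "hermitian (W ** X ** adj W)"
    using herm by (simp add: hermitian_def adj_mult matrix_mul_assoc)
next
  fix u \<mu> assume ev: "(W ** X ** adj W) *v u = complex_of_real \<mu> *s u"
  define v where "v = adj W *v u"
  have Xv: "adj W *v ((W ** X ** adj W) *v u) = X *v v"
    by (simp add: v_def matrix_vector_mul_assoc matrix_mul_assoc WX)
  show "(W ** mfun f X ** adj W) *v u = complex_of_real (f \<mu>) *s u"
  proof (cases "\<mu> = 0")
    case True
    then have "W *v (X *v v) = 0" using ev by (simp add: v_def matrix_vector_mul_assoc matrix_mul_assoc)
    then have "X *v v = 0" using Xv ev True by (simp add: v_def vec.scale)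
    then have "X *v v = complex_of_real 0 *s v" by simp
    from mfun_char[OF herm this, of f] f0
    have "mfun f X *v v = 0" by simp
    then show ?thesis using True f0 by (simp add: v_def matrix_vector_mul_assoc[symmetric])
  next
    case False
    have Xv2: "X *v v = complex_of_real \<mu> *s v" using Xv ev by (simp add: v_def vec.scale)
    have uu: "u = complex_of_real (1/\<mu>) *s (W *v (X *v v))"
    proof -
      have "W *v (X *v v) = complex_of_real \<mu> *s u"
        using ev by (simp add: v_def matrix_vector_mul_assoc matrix_mul_assoc)
      then show ?thesis using False by (simp add: vec.scale)
    qed
    have AWX: "adj W *v (W *v (X *v v)) = X *v v" by (simp add: matrix_vector_mul_assoc matrix_mul_assoc WX)
    have "v = adj W *v u" by (simp add: v_def)
    also have "\<dots> = complex_of_real (1/\<mu>) *s (adj W *v (W *v (X *v v)))"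
      by (subst uu) (simp add: vec.scale)
    finally have "v = complex_of_real (1/\<mu>) *s (X *v v)" using AWX by simp
    then have "W *v v = W *v (complex_of_real (1/\<mu>) *s (X *v v))" by (rule arg_cong)
    then have WWu: "W *v v = u" using uu by (simp only: vec.scale)
    have "(W ** mfun f X ** adj W) *v u = W *v (mfun f X *v v)"
      by (simp add: v_def matrix_vector_mul_assoc matrix_mul_assoc)
    also have "\<dots> = complex_of_real (f \<mu>) *s (W *v v)"
      by (simp add: mfun_char[OF herm Xv2] vec.scale)
    finally show ?thesis using WWu by simp
  qed
qed

lemma psd_decomp_nonneg:
  assumes P: "psd A" and U: "unitary U" and A: "A = U ** diag_mat d ** adj U"
  shows "d i \<ge> 0"
proof -
  define u where "u = U *v axis i (1::complex)"
  have Au: "A *v u = complex_of_real (d i) *s u" unfolding u_def by (rule eig_col[OF U A])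
  have "cinner u u = cinner (axis i 1) (adj U *v (U *v axis i (1::complex)))"
    unfolding u_def using cinner_adj[of "axis i 1" "adj U" "U *v axis i 1"] by simp
  also have "\<dots> = cinner (axis i 1) ((adj U ** U) *v axis i (1::complex))"
    by (simp add: matrix_vector_mul_assoc)
  also have "\<dots> = (\<Sum>k\<in>UNIV. if k = i then 1 else 0)"
    unfolding unitary_left[OF U] cinner_def axis_def by (intro sum.cong refl) auto
  also have "\<dots> = 1" by simp
  finally have uu: "cinner u u = 1" .
  have "0 \<le> Re (cinner u (A *v u))" using P by (simp add: psd_def)
  also have "cinner u (A *v u) = complex_of_real (d i)" by (simp add: Au cinner_scale_right uu)
  finally show ?thesis by simp
qed

lemma msqrt_sq:
  assumes P: "psd A"
  shows "msqrt A ** msqrt A = A" and "adj (msqrt A) = msqrt A"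
proof -
  obtain U d where U: "unitary U" and A: "A = U ** diag_mat d ** adj U"
    using spectral[of A] P by (auto simp: psd_def)
  have d: "d i \<ge> 0" for i by (rule psd_decomp_nonneg[OF P U A])
  have m: "msqrt A = U ** diag_mat (sqrt \<circ> d) ** adj U"
    unfolding msqrt_def by (rule mfun_decomp[OF U A])
  have "msqrt A ** msqrt A = U ** (diag_mat (sqrt \<circ> d) ** (adj U ** U) ** diag_mat (sqrt \<circ> d)) ** adj U"
    by (simp add: m matrix_mul_assoc)
  also have "\<dots> = A" using d by (simp add: unitary_left[OF U] diag_mult A matrix_mul_assoc)
  finally show "msqrt A ** msqrt A = A" .
  show "adj (msqrt A) = msqrt A" by (simp add: m adj_mult matrix_mul_assoc)
qed


lemma kron_entry: "kron A B $ p $ q = A $ fst p $ fst q * B $ snd p $ snd q"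
  by (simp add: kron_def)

lemma proj_entry: "proj x $ i $ j = (if i = x \<and> j = x then 1 else 0)"
  by (simp add: proj_def)

lemma ann_kraus_entry:
  "ann_kraus Q s $ ((h, s'), z) $ j = (if s' = s then msqrt (Q s z) $ h $ j else 0)"
proof -
  have "ann_kraus Q s $ ((h, s'), z) $ j
      = (\<Sum>w\<in>UNIV. if w = z then (if s' = s then msqrt (Q s z) $ h $ j else 0) else 0)"
    unfolding ann_kraus_def sum_component by (intro sum.cong refl) (auto simp: ket_right_def)
  then show ?thesis by simp
qed

lemma sift_entry:
  "sift_proj Ks $ (((ha,sa),oa),((hb,sb),ob)) $ (((ha',sa'),oa'),((hb',sb'),ob'))
   = (if ha = ha' \<and> sa = sa' \<and> oa = oa' \<and> hb = hb' \<and> sb = sb' \<and> ob = ob' \<and> (sa,sb) \<in> Ks then 1 else 0)"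
proof -
  have "sift_proj Ks $ (((ha,sa),oa),((hb,sb),ob)) $ (((ha',sa'),oa'),((hb',sb'),ob'))
     = (\<Sum>p\<in>Ks. if p = (sa,sb) then (if ha = ha' \<and> sa = sa' \<and> oa = oa' \<and> hb = hb' \<and> sb = sb' \<and> ob = ob' then 1 else 0) else 0)"
    unfolding sift_proj_def sum_component
    by (intro sum.cong refl) (auto simp: kron_def proj_def mat_def split: prod.splits)
  then show ?thesis by auto
qed

lemma ket_left_entry: "ket_left x A $ (x', m) $ j = (if x' = x then A $ m $ j else 0)"
  by (simp add: ket_left_def)

lemma kt_entry:
  "kron (kron (kron (mat 1) (proj a)) (mat 1)) (kron (kron (mat 1) (proj b)) (proj w))
     $ (((ha,sa),oa),((hb,sb),ob)) $ (((ha',sa'),oa'),((hb',sb'),ob'))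
   = (if ha = ha' \<and> sa = a \<and> sa' = a \<and> oa = oa' \<and> hb = hb' \<and> sb = b \<and> sb' = b \<and> ob = w \<and> ob' = w then 1 else 0)"
  by (simp add: kron_def proj_def mat_def)

lemma key_entry:
  "key_op Ks k $ (r, (((ha,sa),oa),((hb,sb),ob))) $ Y
   = (if Y = (((ha,sa),oa),((hb,sb),ob)) \<and> (sa,sb) \<in> Ks \<and> r = k sa sb ob then 1 else 0)"
proof -
  obtain ha' sa' oa' hb' sb' ob' where Y: "Y = (((ha',sa'),oa'),((hb',sb'),ob'))"
    by (metis prod.exhaust)
  have "key_op Ks k $ (r, (((ha,sa),oa),((hb,sb),ob))) $ Y
     = (\<Sum>p\<in>Ks. \<Sum>w\<in>UNIV. ket_left (k (fst p) (snd p) w)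
          (kron (kron (kron (mat 1) (proj (fst p))) (mat 1)) (kron (kron (mat 1) (proj (snd p))) (proj w)))
           $ (r, (((ha,sa),oa),((hb,sb),ob))) $ Y)"
    unfolding key_op_def case_prod_beta sum_component ..
  also have "\<dots> = (\<Sum>p\<in>Ks. if p = (sa,sb) then (\<Sum>w\<in>UNIV. if w = ob then
          (if Y = (((ha,sa),oa),((hb,sb),ob)) \<and> r = k sa sb ob then 1 else 0) else 0) else 0)"
  proof (intro sum.cong refl)
    fix p assume "p \<in> Ks"
    show "(\<Sum>w\<in>UNIV. ket_left (k (fst p) (snd p) w)
          (kron (kron (kron (mat 1) (proj (fst p))) (mat 1)) (kron (kron (mat 1) (proj (snd p))) (proj w)))
           $ (r, (((ha,sa),oa),((hb,sb),ob))) $ Y) = (if p = (sa,sb) then (\<Sum>w\<in>UNIV. if w = ob then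
          (if Y = (((ha,sa),oa),((hb,sb),ob)) \<and> r = k sa sb ob then 1 else 0) else 0) else 0)"
    proof (cases "p = (sa,sb)")
      case True
      show ?thesis unfolding True fst_conv snd_conv simp_thms if_True
        by (intro sum.cong refl) (auto simp: ket_left_entry kt_entry Y)
    next
      case False
      obtain a b where p: "p = (a,b)" by (cases p)
      show ?thesis using False by (auto simp: p ket_left_entry kt_entry Y cong: if_cong)
    qed
  qed
  finally show ?thesis by simp
qed


lemma row_delta:
  assumes "\<And>Y. M $ i $ Y = (if Y = y0 then c else 0)"
  shows "(M ** N) $ i $ j = c * N $ y0 $ j"
proof -
  have "(M ** N) $ i $ j = (\<Sum>Y\<in>UNIV. (if Y = y0 then c else 0) * N $ Y $ j)"
    by (simp add: matrix_matrix_mult_def assms)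
  also have "\<dots> = (\<Sum>Y\<in>UNIV. if Y = y0 then c * N $ y0 $ j else 0)"
    by (intro sum.cong refl) auto
  finally show ?thesis by simp
qed

lemma col_delta:
  assumes "\<And>Y. M $ Y $ j = (if Y = y0 then c else 0)"
  shows "(N ** M) $ i $ j = N $ i $ y0 * c"
proof -
  have "(N ** M) $ i $ j = (\<Sum>Y\<in>UNIV. N $ i $ Y * (if Y = y0 then c else 0))"
    by (simp add: matrix_matrix_mult_def assms)
  also have "\<dots> = (\<Sum>Y\<in>UNIV. if Y = y0 then N $ i $ y0 * c else 0)"
    by (intro sum.cong refl) auto
  finally show ?thesis by simp
qed

definition Tk where
  "Tk QA QB Ks k a b = key_op Ks k ** sift_proj Ks ** kron (ann_kraus QA a) (ann_kraus QB b)"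

lemma sift_row:
  "sift_proj Ks $ (((ha,sa),oa),((hb,sb),ob)) $ Y
    = (if Y = (((ha,sa),oa),((hb,sb),ob)) then (if (sa,sb) \<in> Ks then 1 else 0) else 0)"
proof -
  obtain ha' sa' oa' hb' sb' ob' where Y: "Y = (((ha',sa'),oa'),((hb',sb'),ob'))"
    by (metis prod.exhaust)
  show ?thesis by (auto simp: Y sift_entry)
qed

lemma T_entry:
  "Tk QA QB Ks k a b $ (r, (((ha,sa),oa),((hb,sb),ob))) $ (ja,jb)
   = (if (a,b) \<in> Ks \<and> sa = a \<and> sb = b \<and> r = k a b ob
      then msqrt (QA a oa) $ ha $ ja * msqrt (QB b ob) $ hb $ jb else 0)"
proof -
  let ?X = "(((ha,sa),oa),((hb,sb),ob))"
  have "Tk QA QB Ks k a b $ (r, ?X) $ (ja,jb)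
      = (if (sa,sb) \<in> Ks \<and> r = k sa sb ob then 1 else 0) *
        (sift_proj Ks ** kron (ann_kraus QA a) (ann_kraus QB b)) $ ?X $ (ja,jb)"
    unfolding Tk_def matrix_mul_assoc[symmetric]
    by (rule row_delta) (auto simp: key_entry)
  also have "(sift_proj Ks ** kron (ann_kraus QA a) (ann_kraus QB b)) $ ?X $ (ja,jb)
      = (if (sa,sb) \<in> Ks then 1 else 0) * kron (ann_kraus QA a) (ann_kraus QB b) $ ?X $ (ja,jb)"
    by (rule row_delta) (rule sift_row)
  finally show ?thesis by (auto simp: kron_entry ann_kraus_entry)
qed

lemma sift_adj: "adj (sift_proj Ks) = sift_proj Ks"
  by (auto simp: vec_eq_iff split_paired_All sift_entry)

lemma G_kraus:
  "G_map QA QB Ks k \<sigma> = (\<Sum>a\<in>UNIV. \<Sum>b\<in>UNIV. Tk QA QB Ks k a b ** \<sigma> ** adj (Tk QA QB Ks k a b))"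
proof -
  let ?V = "key_op Ks k ** sift_proj Ks"
  let ?R = "sift_proj Ks ** adj (key_op Ks k)"
  have "G_map QA QB Ks k \<sigma> = ?V ** ann_map QA QB \<sigma> ** ?R"
    by (simp add: G_map_def matrix_mul_assoc)
  also have "\<dots> = (\<Sum>a\<in>UNIV. \<Sum>b\<in>UNIV. ?V ** (kron (ann_kraus QA a) (ann_kraus QB b) ** \<sigma> **
        adj (kron (ann_kraus QA a) (ann_kraus QB b))) ** ?R)"
    by (simp add: ann_map_def matrix_mult_sum_left matrix_mult_sum_right)
  also have "\<dots> = (\<Sum>a\<in>UNIV. \<Sum>b\<in>UNIV. Tk QA QB Ks k a b ** \<sigma> ** adj (Tk QA QB Ks k a b))"
    by (simp add: Tk_def adj_mult sift_adj matrix_mul_assoc)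
  finally show ?thesis .
qed

lemma blockid_mult:
  fixes Wg :: "complex^('r::finite \<times> ('x::finite \<times> 'y1::finite))^('r \<times> ('x \<times> 'y2::finite))"
  assumes W: "\<And>r x y r' x' y'. Wg $ (r,(x,y)) $ (r',(x',y')) = (if r = r' \<and> x = x' then B $ y $ y' else 0)"
  shows "(Wg ** N) $ (r,(x,y)) $ j = (\<Sum>y'\<in>UNIV. B $ y $ y' * N $ (r,(x,y')) $ j)"
proof -
  have "(Wg ** N) $ (r,(x,y)) $ j = (\<Sum>r'\<in>UNIV. \<Sum>x'\<in>UNIV. \<Sum>y'\<in>UNIV. Wg $ (r,(x,y)) $ (r',(x',y')) * N $ (r',(x',y')) $ j)"
    by (simp add: matrix_matrix_mult_def sum_UNIV_prod)
  also have "\<dots> = (\<Sum>r'\<in>UNIV. if r' = r then (\<Sum>x'\<in>UNIV. if x' = x then (\<Sum>y'\<in>UNIV. B $ y $ y' * N $ (r,(x,y')) $ j) else 0) else 0)"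
  proof (intro sum.cong refl)
    fix r' show "(\<Sum>x'\<in>UNIV. \<Sum>y'\<in>UNIV. Wg $ (r,(x,y)) $ (r',(x',y')) * N $ (r',(x',y')) $ j) =
      (if r' = r then (\<Sum>x'\<in>UNIV. if x' = x then (\<Sum>y'\<in>UNIV. B $ y $ y' * N $ (r,(x,y')) $ j) else 0) else 0)"
    proof (cases "r' = r")
      case True
      show ?thesis unfolding True simp_thms if_True
      proof (intro sum.cong refl)
        fix x' show "(\<Sum>y'\<in>UNIV. Wg $ (r,(x,y)) $ (r,(x',y')) * N $ (r,(x',y')) $ j) =
          (if x' = x then (\<Sum>y'\<in>UNIV. B $ y $ y' * N $ (r,(x,y')) $ j) else 0)"
          by (cases "x' = x") (auto simp: W)
      qed
    next
      case False then show ?thesis by (auto simp: W)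
    qed
  qed
  also have "\<dots> = (\<Sum>y'\<in>UNIV. B $ y $ y' * N $ (r,(x,y')) $ j)" by simp
  finally show ?thesis .
qed

lemma blockid_adjmult:
  fixes Wg :: "complex^('r::finite \<times> ('x::finite \<times> 'y1::finite))^('r \<times> ('x \<times> 'y2::finite))"
  assumes W: "\<And>r x y r' x' y'. Wg $ (r,(x,y)) $ (r',(x',y')) = (if r = r' \<and> x = x' then B $ y $ y' else 0)"
  shows "(adj Wg ** Wg) $ (r,(x,y)) $ (r',(x',y')) = (if r = r' \<and> x = x' then (adj B ** B) $ y $ y' else 0)"
proof -
  have aW: "adj Wg $ (r,(x,y)) $ (r',(x',y')) = (if r = r' \<and> x = x' then adj B $ y $ y' else 0)"
    for r x y r' x' y' by (auto simp: W)
  have "(adj Wg ** Wg) $ (r,(x,y)) $ (r',(x',y')) = (\<Sum>y''\<in>UNIV. adj B $ y $ y'' * Wg $ (r,(x,y'')) $ (r',(x',y')))"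
    by (rule blockid_mult[OF aW])
  also have "\<dots> = (if r = r' \<and> x = x' then (adj B ** B) $ y $ y' else 0)"
    by (auto simp: W matrix_matrix_mult_def)
  finally show ?thesis .
qed

lemma blockid_comm:
  fixes Wg :: "complex^('r::finite \<times> ('x::finite \<times> 'y1::finite))^('r \<times> ('x \<times> 'y2::finite))"
  assumes W: "\<And>r x y r' x' y'. Wg $ (r,(x,y)) $ (r',(x',y')) = (if r = r' \<and> x = x' then B $ y $ y' else 0)"
  shows "kron (proj j) (mat 1) ** Wg = Wg ** kron (proj j) (mat 1)"
proof -
  have "(kron (proj j) (mat 1) ** Wg) $ (r,m) $ (r',m') = (Wg ** kron (proj j) (mat 1)) $ (r,m) $ (r',m')" for r m r' m'
  proof -
    have "(kron (proj j) (mat 1) ** Wg) $ (r,m) $ (r',m') = (if r = j then 1 else 0) * Wg $ (j,m) $ (r',m')"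
      by (rule row_delta) (auto simp: kron_entry proj_entry mat_def)
    moreover have "(Wg ** kron (proj j) (mat 1)) $ (r,m) $ (r',m') = Wg $ (r,m) $ (j,m') * (if r' = j then 1 else 0)"
      by (rule col_delta) (auto simp: kron_entry proj_entry mat_def)
    moreover obtain x y where m: "m = (x,y)" by (cases m)
    moreover obtain x' y' where m': "m' = (x',y')" by (cases m')
    ultimately show ?thesis by (auto simp: W)
  qed
  then show ?thesis by (auto simp: vec_eq_iff)
qed


lemma mul_adj_unit: "unitary U \<Longrightarrow> A ** adj U ** U = A"
  by (simp add: matrix_mul_assoc[symmetric] unitary_left)

lemma mul_unit_adj: "unitary U \<Longrightarrow> A ** U ** adj U = A"
  by (simp add: matrix_mul_assoc[symmetric] unitary_right)

lemma mul_diag_diag: "A ** diag_mat d1 ** diag_mat d2 = A ** diag_mat (\<lambda>i. d1 i * d2 i)"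
  by (simp add: matrix_mul_assoc[symmetric] diag_mult)

lemma diag_zero: "diag_mat (\<lambda>i. 0) = 0"
  by (simp add: vec_eq_iff diag_mat_def)

lemma psd_adjM: "psd (adj M ** M)"
proof -
  have "cinner v ((adj M ** M) *v v) = cinner (M *v v) (M *v v)" for v
    using cinner_adj[of v "adj M" "M *v v"] by (simp add: matrix_vector_mul_assoc)
  then show ?thesis
    by (simp add: psd_def hermitian_def adj_mult cinner_self)
qed

lemma polar:
  fixes M :: "complex^'n^'m"
  shows "\<exists>W. W ** msqrt (adj M ** M) = M \<and> adj W ** W ** msqrt (adj M ** M) = msqrt (adj M ** M)
           \<and> (\<forall>r. M $ r = 0 \<longrightarrow> W $ r = 0)"
proof -
  define F where "F = adj M ** M"
  have psdF: "psd F" unfolding F_def by (rule psd_adjM)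
  obtain U d where U: "unitary U" and Fd: "F = U ** diag_mat d ** adj U"
    using spectral[of F] psdF by (auto simp: psd_def)
  have d0: "d i \<ge> 0" for i by (rule psd_decomp_nonneg[OF psdF U Fd])
  have sF: "msqrt F = U ** diag_mat (sqrt \<circ> d) ** adj U"
    unfolding msqrt_def by (rule mfun_decomp[OF U Fd])
  define e where "e i = (if d i = 0 then 0 else 1 / sqrt (d i))" for i
  define q where "q i = (if d i = 0 then 0 else (1::real))" for i
  define W where "W = M ** U ** diag_mat e ** adj U"
  have eq1: "diag_mat (\<lambda>i. e i * (sqrt \<circ> d) i) = diag_mat q"
    by (rule arg_cong[where f = diag_mat]) (auto simp: e_def q_def)
  have UFU: "adj U ** F ** U = diag_mat d"
    by (simp add: Fd matrix_mul_assoc mul_adj_unit[OF U] unitary_left[OF U])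
  define N where "N = M ** U ** diag_mat (\<lambda>i. 1 - q i)"
  have "adj N ** N = diag_mat (\<lambda>i. 1 - q i) ** (adj U ** F ** U) ** diag_mat (\<lambda>i. 1 - q i)"
    by (simp add: N_def F_def adj_mult matrix_mul_assoc)
  also have "\<dots> = diag_mat (\<lambda>i. (1 - q i) * d i * (1 - q i))"
    by (simp add: UFU diag_mult)
  also have "(\<lambda>i. (1 - q i) * d i * (1 - q i)) = (\<lambda>i. 0)"
    by (auto simp: q_def)
  finally have "adj N ** N = 0" by (simp add: diag_zero)
  then have N0: "N = 0" by (rule adj_zero_iff)
  have Mq: "M ** U ** diag_mat q ** adj U = M"
  proof -
    have "M = M ** U ** (diag_mat q + diag_mat (\<lambda>i. 1 - q i)) ** adj U"
      by (simp add: diag_add diag_one mul_unit_adj[OF U])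
    also have "\<dots> = M ** U ** diag_mat q ** adj U + N ** adj U"
      by (simp add: N_def matrix_add_ldistrib matrix_add_rdistrib matrix_mul_assoc)
    finally show ?thesis by (simp add: N0)
  qed
  have c1: "W ** msqrt F = M"
  proof -
    have "W ** msqrt F = M ** U ** diag_mat (\<lambda>i. e i * (sqrt \<circ> d) i) ** adj U"
      by (simp add: W_def sF matrix_mul_assoc mul_adj_unit[OF U] mul_diag_diag del: o_apply)
    then show ?thesis by (simp only: eq1 Mq)
  qed
  have c2: "adj W ** W ** msqrt F = msqrt F"
  proof -
    have aW: "adj W = U ** diag_mat e ** adj U ** adj M"
      by (simp add: W_def adj_mult matrix_mul_assoc)
    have "adj W ** W = U ** diag_mat e ** (adj U ** F ** U) ** diag_mat e ** adj U"
      unfolding aW by (simp add: W_def F_def matrix_mul_assoc)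
    also have "\<dots> = U ** diag_mat e ** diag_mat d ** diag_mat e ** adj U"
      by (simp add: UFU)
    finally have WW: "adj W ** W = U ** diag_mat e ** diag_mat d ** diag_mat e ** adj U" .
    have "adj W ** W ** msqrt F = U ** diag_mat (\<lambda>i. e i * d i * e i * (sqrt \<circ> d) i) ** adj U"
      unfolding WW sF by (simp add: matrix_mul_assoc mul_adj_unit[OF U] mul_diag_diag del: o_apply)
    also have "(\<lambda>i. e i * d i * e i * (sqrt \<circ> d) i) = sqrt \<circ> d"
    proof
      fix i show "e i * d i * e i * (sqrt \<circ> d) i = (sqrt \<circ> d) i"
      proof (cases "d i = 0")
        case False
        then have "sqrt (d i) > 0" using d0[of i] by simp
        then show ?thesis using False d0[of i]
          by (simp add: e_def field_simps)
      qed (simp add: e_def)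
    qed
    finally show ?thesis by (simp only: sF[symmetric])
  qed
  have c3: "\<forall>r. M $ r = 0 \<longrightarrow> W $ r = 0"
    by (auto simp: W_def matrix_mul_assoc[symmetric] matrix_matrix_mult_def vec_eq_iff)
  show ?thesis using c1 c2 c3 unfolding F_def by blast
qed


lemma adj_Pj: "adj (kron (proj j) (mat 1)) = kron (proj j) (mat 1)"
  by (auto simp: vec_eq_iff split_paired_All kron_entry proj_entry mat_def)

lemma Z_conj:
  fixes Wg :: "complex^('r::finite \<times> ('x::finite \<times> 'y1::finite))^('r \<times> ('x \<times> 'y2::finite))"
  assumes W: "\<And>r x y r' x' y'. Wg $ (r,(x,y)) $ (r',(x',y')) = (if r = r' \<and> x = x' then B $ y $ y' else 0)"
  shows "Z_map (Wg ** Y ** adj Wg) = Wg ** Z_map Y ** adj Wg"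
proof -
  have c: "kron (proj j) (mat 1) ** Wg = Wg ** kron (proj j) (mat 1)" for j
    by (rule blockid_comm[OF W])
  have c': "adj Wg ** kron (proj j) (mat 1) = kron (proj j) (mat 1) ** adj Wg" for j
    using arg_cong[OF c[of j], of adj] by (simp add: adj_mult adj_Pj)
  have "Z_map (Wg ** Y ** adj Wg) = (\<Sum>j\<in>UNIV. Wg ** (kron (proj j) (mat 1) ** Y ** kron (proj j) (mat 1)) ** adj Wg)"
    unfolding Z_map_def
  proof (intro sum.cong refl)
    fix j
    have "kron (proj j) (mat 1) ** (Wg ** Y ** adj Wg) ** kron (proj j) (mat 1)
        = (kron (proj j) (mat 1) ** Wg) ** Y ** (adj Wg ** kron (proj j) (mat 1))"
      by (simp add: matrix_mul_assoc)
    also have "\<dots> = Wg ** (kron (proj j) (mat 1) ** Y ** kron (proj j) (mat 1)) ** adj Wg"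
      by (simp add: c c' matrix_mul_assoc)
    finally show "kron (proj j) (mat 1) ** (Wg ** Y ** adj Wg) ** kron (proj j) (mat 1)
        = Wg ** (kron (proj j) (mat 1) ** Y ** kron (proj j) (mat 1)) ** adj Wg" .
  qed
  also have "\<dots> = Wg ** Z_map Y ** adj Wg"
    by (simp add: Z_map_def matrix_mult_sum_left matrix_mult_sum_right)
  finally show ?thesis .
qed

lemma Z_fix:
  fixes Wg :: "complex^('r::finite \<times> ('x::finite \<times> 'y1::finite))^('r \<times> ('x \<times> 'y2::finite))"
  assumes W: "\<And>r x y r' x' y'. Wg $ (r,(x,y)) $ (r',(x',y')) = (if r = r' \<and> x = x' then B $ y $ y' else 0)"
    and WYf: "adj Wg ** Wg ** Y = Y"
  shows "adj Wg ** Wg ** Z_map Y = Z_map Y"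
proof -
  have c: "kron (proj j) (mat 1) ** Wg = Wg ** kron (proj j) (mat 1)" for j
    by (rule blockid_comm[OF W])
  have c': "adj Wg ** kron (proj j) (mat 1) = kron (proj j) (mat 1) ** adj Wg" for j
    using arg_cong[OF c[of j], of adj] by (simp add: adj_mult adj_Pj)
  have cc: "adj Wg ** Wg ** kron (proj j) (mat 1) = kron (proj j) (mat 1) ** (adj Wg ** Wg)" for j
  proof -
    have "adj Wg ** Wg ** kron (proj j) (mat 1) = adj Wg ** (kron (proj j) (mat 1) ** Wg)"
      by (simp add: c matrix_mul_assoc)
    also have "\<dots> = kron (proj j) (mat 1) ** (adj Wg ** Wg)"
      by (simp add: c' matrix_mul_assoc)
    finally show ?thesis .
  qed
  have "adj Wg ** Wg ** Z_map Y = (\<Sum>j\<in>UNIV. (adj Wg ** Wg ** kron (proj j) (mat 1)) ** Y ** kron (proj j) (mat 1))"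
    by (simp add: Z_map_def matrix_mult_sum_right matrix_mul_assoc)
  also have "\<dots> = (\<Sum>j\<in>UNIV. kron (proj j) (mat 1) ** (adj Wg ** Wg ** Y) ** kron (proj j) (mat 1))"
    by (simp add: cc matrix_mul_assoc)
  also have "\<dots> = Z_map Y" by (simp add: WYf Z_map_def)
  finally show ?thesis .
qed

lemma Z_hermitian: "hermitian Y \<Longrightarrow> hermitian (Z_map Y)"
  by (simp add: hermitian_def Z_map_def adj_sum adj_mult adj_Pj matrix_mul_assoc)

lemma conj_hermitian: "hermitian Y \<Longrightarrow> hermitian (T ** Y ** adj T)"
  by (simp add: hermitian_def adj_mult matrix_mul_assoc)

lemma sum_hermitian: "(\<And>x. x \<in> S \<Longrightarrow> hermitian (f x)) \<Longrightarrow> hermitian (sum f S)"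
  by (simp add: hermitian_def adj_sum)

lemma rel_entropy_conj:
  fixes W :: "complex^'n^'m"
  assumes hX: "hermitian X" and hY: "hermitian Y"
    and WX: "adj W ** W ** X = X" and WY: "adj W ** W ** Y = Y"
  shows "rel_entropy (W ** X ** adj W) (W ** Y ** adj W) = rel_entropy X Y"
proof -
  have XW: "X ** (adj W ** W) = X"
    using arg_cong[OF WX, of adj] hX by (simp add: adj_mult hermitian_def matrix_mul_assoc)
  have YW: "Y ** (adj W ** W) = Y"
    using arg_cong[OF WY, of adj] hY by (simp add: adj_mult hermitian_def matrix_mul_assoc)
  have supp: "(\<forall>v. (W ** Y ** adj W) *v v = 0 \<longrightarrow> (W ** X ** adj W) *v v = 0)
            \<longleftrightarrow> (\<forall>v. Y *v v = 0 \<longrightarrow> X *v v = 0)"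
  proof
    assume h: "\<forall>v. (W ** Y ** adj W) *v v = 0 \<longrightarrow> (W ** X ** adj W) *v v = 0"
    show "\<forall>v. Y *v v = 0 \<longrightarrow> X *v v = 0"
    proof (intro allI impI)
      fix v assume Yv: "Y *v v = 0"
      have "(W ** Y ** adj W) *v (W *v v) = W *v ((Y ** (adj W ** W)) *v v)"
        by (simp add: matrix_vector_mul_assoc matrix_mul_assoc)
      also have "\<dots> = 0" by (simp add: YW Yv)
      finally have "(W ** X ** adj W) *v (W *v v) = 0" using h by blast
      then have "W *v (X *v v) = 0"
        by (simp add: matrix_vector_mul_assoc matrix_mul_assoc[symmetric] XW)
      then have "adj W *v (W *v (X *v v)) = 0" by simp
      then show "X *v v = 0" by (simp add: matrix_vector_mul_assoc matrix_mul_assoc WX)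
    qed
  next
    assume h: "\<forall>v. Y *v v = 0 \<longrightarrow> X *v v = 0"
    show "\<forall>v. (W ** Y ** adj W) *v v = 0 \<longrightarrow> (W ** X ** adj W) *v v = 0"
    proof (intro allI impI)
      fix u assume "(W ** Y ** adj W) *v u = 0"
      then have "adj W *v ((W ** Y ** adj W) *v u) = 0" by simp
      then have "Y *v (adj W *v u) = 0"
        by (simp add: matrix_vector_mul_assoc matrix_mul_assoc WY)
      then have "X *v (adj W *v u) = 0" using h by blast
      then show "(W ** X ** adj W) *v u = 0"
        by (metis matrix_vector_mul_assoc matrix_vector_mult_0_right)
    qed
  qed
  have lX: "mlog2 (W ** X ** adj W) = W ** mlog2 X ** adj W"
    unfolding mlog2_def by (rule mfun_conj[OF hX _ WX]) (simp add: log_def)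
  have lY: "mlog2 (W ** Y ** adj W) = W ** mlog2 Y ** adj W"
    unfolding mlog2_def by (rule mfun_conj[OF hY _ WY]) (simp add: log_def)
  have tr: "trace (W ** X ** adj W ** (W ** L ** adj W)) = trace (X ** L)" for L
  proof -
    have "W ** X ** adj W ** (W ** L ** adj W) = W ** ((X ** (adj W ** W)) ** L ** adj W)"
      by (simp add: matrix_mul_assoc)
    also have "\<dots> = W ** (X ** L ** adj W)" by (simp add: XW)
    finally have "trace (W ** X ** adj W ** (W ** L ** adj W)) = trace (W ** (X ** L ** adj W))"
      by simp
    also have "\<dots> = trace (X ** L ** adj W ** W)" by (rule trace_mul_sym)
    also have "\<dots> = trace ((X ** L) ** (adj W ** W))" by (simp add: matrix_mul_assoc)
    also have "\<dots> = trace ((adj W ** W) ** (X ** L))" by (rule trace_mul_sym)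
    also have "\<dots> = trace (X ** L)" by (simp add: matrix_mul_assoc WX)
    finally show ?thesis .
  qed
  show ?thesis
    unfolding rel_entropy_def supp lX lY tr ..
qed


lemma sum_collapse:
  "(\<Sum>x\<in>(UNIV::'a::finite set). \<Sum>y\<in>(UNIV::'b::finite set). if x = x0 then t x y else (0::complex)) = (\<Sum>y\<in>UNIV. t x0 y)"
proof -
  have "(\<Sum>x\<in>(UNIV::'a set). \<Sum>y\<in>(UNIV::'b set). if x = x0 then t x y else 0)
      = (\<Sum>x\<in>(UNIV::'a set). if x = x0 then (\<Sum>y\<in>UNIV. t x0 y) else 0)"
    by (intro sum.cong refl) auto
  then show ?thesis by simp
qed

theorem mainTheorem3:
  fixes PA :: "'x::finite \<Rightarrow> complex^'ha::finite^'ha"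
    and PB :: "'y::finite \<Rightarrow> complex^'hb::finite^'hb"
    and fa :: "'sa::finite \<Rightarrow> 'oa::finite \<Rightarrow> 'x"
    and fb :: "'sb::finite \<Rightarrow> 'ob::finite \<Rightarrow> 'y"
    and Ks :: "('sa \<times> 'sb) set"
    and g :: "'sa \<Rightarrow> 'sb \<Rightarrow> 'y \<Rightarrow> 'r::finite"
    and c :: "'y \<Rightarrow> 'c::finite"
    and h :: "'sa \<Rightarrow> 'sb \<Rightarrow> 'c \<Rightarrow> 'r"
    and \<rho> :: "complex^('ha \<times> 'hb)^('ha \<times> 'hb)"
  assumes povmA: "povm PA"
    and povmB: "povm PB"
    and fa_inj: "\<forall>a. inj (fa a)"
    and fa_disj: "\<forall>a a'. a \<noteq> a' \<longrightarrow> range (fa a) \<inter> range (fa a') = {}"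
    and fa_cover: "(\<Union>a. range (fa a)) = UNIV"
    and fb_inj: "\<forall>b. inj (fb b)"
    and fb_disj: "\<forall>b b'. b \<noteq> b' \<longrightarrow> range (fb b) \<inter> range (fb b') = {}"
    and fb_cover: "(\<Union>b. range (fb b)) = UNIV"
    and g_factor: "\<forall>(a,b)\<in>Ks. \<forall>y\<in>range (fb b). g a b y = h a b (c y)"
    and rho: "density_op \<rho>"
  defines "F \<equiv> (\<lambda>b \<kappa>. \<Sum>y\<in>{y\<in>range (fb b). c y = \<kappa>}. PB y)"
  shows "rel_entropy (G_map (\<lambda>a \<alpha>. PA (fa a \<alpha>)) (\<lambda>b \<beta>. PB (fb b \<beta>)) Ks (\<lambda>a b \<beta>. g a b (fb b \<beta>)) \<rho>)
                     (Z_map (G_map (\<lambda>a \<alpha>. PA (fa a \<alpha>)) (\<lambda>b \<beta>. PB (fb b \<beta>)) Ks (\<lambda>a b \<beta>. g a b (fb b \<beta>)) \<rho>))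
       = rel_entropy (G_map (\<lambda>a \<alpha>. PA (fa a \<alpha>)) F Ks h \<rho>)
                     (Z_map (G_map (\<lambda>a \<alpha>. PA (fa a \<alpha>)) F Ks h \<rho>))"
proof -
  define QA where "QA = (\<lambda>a \<alpha>. PA (fa a \<alpha>))"
  define QB where "QB = (\<lambda>b \<beta>. PB (fb b \<beta>))"
  define g' where "g' = (\<lambda>a b \<beta>. g a b (fb b \<beta>))"
  have psdB: "psd (PB y)" for y using povmB by (simp add: povm_def)
  define M :: "'sb \<Rightarrow> 'c \<Rightarrow> complex^'hb^('hb \<times> 'ob)" where
    "M b \<kappa> = (\<chi> p j. if c (fb b (snd p)) = \<kappa> then msqrt (PB (fb b (snd p))) $ fst p $ j else 0)" for b \<kappa>
  have M_entry: "M b \<kappa> $ (i, z) $ j = (if c (fb b z) = \<kappa> then msqrt (PB (fb b z)) $ i $ j else 0)" for b \<kappa> i z j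
    by (simp add: M_def)
  have MF: "adj (M b \<kappa>) ** M b \<kappa> = F b \<kappa>" for b \<kappa>
  proof -
    have "(adj (M b \<kappa>) ** M b \<kappa>) $ i $ j = F b \<kappa> $ i $ j" for i j
    proof -
      have "(adj (M b \<kappa>) ** M b \<kappa>) $ i $ j
          = (\<Sum>z\<in>UNIV. \<Sum>i'\<in>UNIV. cnj (M b \<kappa> $ (i', z) $ i) * M b \<kappa> $ (i', z) $ j)"
        by (simp add: matrix_matrix_mult_def sum_UNIV_prod) (rule sum.swap)
      also have "\<dots> = (\<Sum>z\<in>UNIV. if c (fb b z) = \<kappa> then (adj (msqrt (PB (fb b z))) ** msqrt (PB (fb b z))) $ i $ j else 0)"
        by (intro sum.cong refl) (simp add: M_entry matrix_matrix_mult_def)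
      also have "\<dots> = (\<Sum>z\<in>UNIV. if c (fb b z) = \<kappa> then PB (fb b z) $ i $ j else 0)"
        by (simp add: msqrt_sq[OF psdB] cong: if_cong)
      also have "\<dots> = (\<Sum>z\<in>{z. c (fb b z) = \<kappa>}. PB (fb b z) $ i $ j)"
        by (simp add: sum.inter_filter[symmetric])
      also have "\<dots> = (\<Sum>y\<in>fb b ` {z. c (fb b z) = \<kappa>}. PB y $ i $ j)"
        using fb_inj by (subst sum.reindex) (auto simp: inj_on_def inj_def)
      also have "fb b ` {z. c (fb b z) = \<kappa>} = {y\<in>range (fb b). c y = \<kappa>}" by auto
      finally show ?thesis by (simp add: F_def)
    qed
    then show ?thesis by (simp add: vec_eq_iff)
  qed
  have "\<forall>b \<kappa>. \<exists>W. W ** msqrt (F b \<kappa>) = M b \<kappa> \<and> adj W ** W ** msqrt (F b \<kappa>) = msqrt (F b \<kappa>)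
           \<and> (\<forall>r. M b \<kappa> $ r = 0 \<longrightarrow> W $ r = 0)"
    using polar[of "M _ _"] by (simp add: MF)
  then obtain Wb where Wb: "\<And>b \<kappa>. Wb b \<kappa> ** msqrt (F b \<kappa>) = M b \<kappa>"
     "\<And>b \<kappa>. adj (Wb b \<kappa>) ** Wb b \<kappa> ** msqrt (F b \<kappa>) = msqrt (F b \<kappa>)"
     "\<And>b \<kappa> r. M b \<kappa> $ r = 0 \<Longrightarrow> Wb b \<kappa> $ r = 0"
    by metis
  have Wb_zero: "Wb b \<kappa> $ (i, z) = 0" if "c (fb b z) \<noteq> \<kappa>" for b \<kappa> i z
    using that by (intro Wb(3)) (simp add: vec_eq_iff M_entry)
  have cross: "adj (Wb b \<kappa>) ** Wb b \<kappa>' = 0" if "\<kappa> \<noteq> \<kappa>'" for b \<kappa> \<kappa>'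
  proof -
    have "(adj (Wb b \<kappa>) ** Wb b \<kappa>') $ i $ j = 0" for i j
    proof -
      have "(adj (Wb b \<kappa>) ** Wb b \<kappa>') $ i $ j
          = (\<Sum>i'\<in>UNIV. \<Sum>z\<in>UNIV. cnj (Wb b \<kappa> $ (i', z) $ i) * Wb b \<kappa>' $ (i', z) $ j)"
        by (simp add: matrix_matrix_mult_def sum_UNIV_prod)
      also have "\<dots> = 0"
      proof (intro sum.neutral ballI)
        fix i' z
        show "cnj (Wb b \<kappa> $ (i', z) $ i) * Wb b \<kappa>' $ (i', z) $ j = 0"
          using that Wb_zero[of b z \<kappa> i'] Wb_zero[of b z \<kappa>' i'] by (cases "c (fb b z) = \<kappa>") auto
      qed
      finally show ?thesis .
    qed
    then show ?thesis by (simp add: vec_eq_iff)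
  qed
  define Wbig :: "complex^(('hb \<times> 'sb) \<times> 'c)^(('hb \<times> 'sb) \<times> 'ob)" where
    "Wbig = (\<chi> y y'. if snd (fst y) = snd (fst y') then Wb (snd (fst y)) (snd y') $ (fst (fst y), snd y) $ fst (fst y') else 0)"
  have Wbig_entry: "Wbig $ ((ib, sb), z) $ ((ib', sb'), \<kappa>) = (if sb = sb' then Wb sb \<kappa> $ (ib, z) $ ib' else 0)"
    for ib sb z ib' sb' \<kappa> by (simp add: Wbig_def)
  define Wg :: "complex^('r \<times> ((('ha \<times> 'sa) \<times> 'oa) \<times> (('hb \<times> 'sb) \<times> 'c)))^('r \<times> ((('ha \<times> 'sa) \<times> 'oa) \<times> (('hb \<times> 'sb) \<times> 'ob)))"
    where "Wg = (\<chi> p q. if fst p = fst q \<and> fst (snd p) = fst (snd q) then Wbig $ snd (snd p) $ snd (snd q) else 0)"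
  have Wg_entry: "\<And>r x y r' x' y'. Wg $ (r,(x,y)) $ (r',(x',y')) = (if r = r' \<and> x = x' then Wbig $ y $ y' else 0)"
    by (simp add: Wg_def)
  have T1: "Tk QA QB Ks g' a b = Wg ** Tk QA F Ks h a b" for a b
  proof -
    have "Tk QA QB Ks g' a b $ (r,(((ha,sa),oa),((ib,sb),z))) $ (ja,jb)
        = (Wg ** Tk QA F Ks h a b) $ (r,(((ha,sa),oa),((ib,sb),z))) $ (ja,jb)"
      for r ha sa oa ib sb z ja jb
    proof -
      let ?xa = "((ha,sa),oa)"
      have A: "(Wg ** Tk QA F Ks h a b) $ (r,(?xa,((ib,sb),z))) $ (ja,jb)
          = (\<Sum>ib'\<in>UNIV. \<Sum>sb'\<in>UNIV. \<Sum>\<kappa>\<in>UNIV. Wbig $ ((ib,sb),z) $ ((ib',sb'),\<kappa>) *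
               Tk QA F Ks h a b $ (r,(?xa,((ib',sb'),\<kappa>))) $ (ja,jb))"
        by (simp only: blockid_mult[OF Wg_entry] sum_UNIV_prod)
      show ?thesis
      proof (cases "(a,b) \<in> Ks \<and> sa = a \<and> sb = b")
        case False
        have "(Wg ** Tk QA F Ks h a b) $ (r,(?xa,((ib,sb),z))) $ (ja,jb) = 0"
          unfolding A using False by (intro sum.neutral ballI) (auto simp: Wbig_entry T_entry)
        then show ?thesis using False by (auto simp: T_entry)
      next
        case True
        then have Ks: "(a,b) \<in> Ks" and sa: "sa = a" and sb: "sb = b" by auto
        let ?q = "msqrt (QA a oa) $ ha $ ja"
        have trm: "Wbig $ ((ib,sb),z) $ ((ib',sb'),\<kappa>) * Tk QA F Ks h a b $ (r,(?xa,((ib',sb'),\<kappa>))) $ (ja,jb)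
           = (if sb' = b then (if r = h a b \<kappa> then Wb b \<kappa> $ (ib,z) $ ib' * (?q * msqrt (F b \<kappa>) $ ib' $ jb) else 0) else 0)"
          for ib' sb' \<kappa> using Ks sa sb by (simp add: Wbig_entry T_entry)
        have "(Wg ** Tk QA F Ks h a b) $ (r,(?xa,((ib,sb),z))) $ (ja,jb)
          = (\<Sum>ib'\<in>UNIV. \<Sum>sb'\<in>UNIV. \<Sum>\<kappa>\<in>UNIV. if sb' = b then (if r = h a b \<kappa> then Wb b \<kappa> $ (ib,z) $ ib' * (?q * msqrt (F b \<kappa>) $ ib' $ jb) else 0) else 0)"
          unfolding A trm ..
        also have "\<dots> = (\<Sum>ib'\<in>UNIV. \<Sum>\<kappa>\<in>UNIV. if r = h a b \<kappa> then Wb b \<kappa> $ (ib,z) $ ib' * (?q * msqrt (F b \<kappa>) $ ib' $ jb) else 0)"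
          by (simp only: sum_collapse)
        also have "\<dots> = (\<Sum>\<kappa>\<in>UNIV. \<Sum>ib'\<in>UNIV. if r = h a b \<kappa> then Wb b \<kappa> $ (ib,z) $ ib' * (?q * msqrt (F b \<kappa>) $ ib' $ jb) else 0)"
          by (rule sum.swap)
        also have "\<dots> = (\<Sum>\<kappa>\<in>UNIV. if r = h a b \<kappa> then ?q * (Wb b \<kappa> ** msqrt (F b \<kappa>)) $ (ib,z) $ jb else 0)"
          by (intro sum.cong refl) (auto simp: matrix_matrix_mult_def sum_distrib_left algebra_simps)
        also have "\<dots> = (\<Sum>\<kappa>\<in>UNIV. if \<kappa> = c (fb b z) then (if r = h a b \<kappa> then ?q * msqrt (PB (fb b z)) $ ib $ jb else 0) else 0)"
          by (intro sum.cong refl) (auto simp: Wb(1) M_entry)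
        also have "\<dots> = (if r = h a b (c (fb b z)) then ?q * msqrt (PB (fb b z)) $ ib $ jb else 0)"
          by simp
        finally have R: "(Wg ** Tk QA F Ks h a b) $ (r,(?xa,((ib,sb),z))) $ (ja,jb)
            = (if r = h a b (c (fb b z)) then ?q * msqrt (PB (fb b z)) $ ib $ jb else 0)" .
        have gh: "g' a b z = h a b (c (fb b z))"
          using g_factor Ks by (auto simp: g'_def)
        show ?thesis unfolding R using Ks sa sb gh by (simp add: T_entry QB_def)
      qed
    qed
    then show ?thesis by (simp add: vec_eq_iff split_paired_All)
  qed
  have Bp: "(adj Wbig ** Wbig) $ ((ib,sb),\<kappa>) $ ((ib',sb'),\<kappa>')
      = (if sb' = sb then (if \<kappa>' = \<kappa> then (adj (Wb sb \<kappa>) ** Wb sb \<kappa>) $ ib $ ib' else 0) else 0)"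
    for ib sb \<kappa> ib' sb' \<kappa>'
  proof -
    have "(adj Wbig ** Wbig) $ ((ib,sb),\<kappa>) $ ((ib',sb'),\<kappa>')
       = (\<Sum>i2\<in>UNIV. \<Sum>s2\<in>UNIV. \<Sum>z\<in>UNIV. cnj (Wbig $ ((i2,s2),z) $ ((ib,sb),\<kappa>)) * Wbig $ ((i2,s2),z) $ ((ib',sb'),\<kappa>'))"
      by (simp add: matrix_matrix_mult_def sum_UNIV_prod)
    also have "\<dots> = (\<Sum>i2\<in>UNIV. \<Sum>s2\<in>UNIV. \<Sum>z\<in>UNIV. if s2 = sb then (if sb' = sb then cnj (Wb sb \<kappa> $ (i2,z) $ ib) * Wb sb \<kappa>' $ (i2,z) $ ib' else 0) else 0)"
      by (intro sum.cong refl) (auto simp: Wbig_entry)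
    also have "\<dots> = (\<Sum>i2\<in>UNIV. \<Sum>z\<in>UNIV. if sb' = sb then cnj (Wb sb \<kappa> $ (i2,z) $ ib) * Wb sb \<kappa>' $ (i2,z) $ ib' else 0)"
      by (simp only: sum_collapse)
    also have "\<dots> = (if sb' = sb then (adj (Wb sb \<kappa>) ** Wb sb \<kappa>') $ ib $ ib' else 0)"
      by (simp add: matrix_matrix_mult_def sum_UNIV_prod)
    also have "\<dots> = (if sb' = sb then (if \<kappa>' = \<kappa> then (adj (Wb sb \<kappa>) ** Wb sb \<kappa>) $ ib $ ib' else 0) else 0)"
      using cross[of \<kappa> \<kappa>' sb] by auto
    finally show ?thesis .
  qed
  have T2: "adj Wg ** Wg ** Tk QA F Ks h a b = Tk QA F Ks h a b" for a b
  proof -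
    have WWg: "\<And>r x y r' x' y'. (adj Wg ** Wg) $ (r,(x,y)) $ (r',(x',y'))
        = (if r = r' \<and> x = x' then (adj Wbig ** Wbig) $ y $ y' else 0)"
      by (rule blockid_adjmult[OF Wg_entry])
    have "(adj Wg ** Wg ** Tk QA F Ks h a b) $ (r,(((ha,sa),oa),((ib,sb),\<kappa>))) $ (ja,jb)
        = Tk QA F Ks h a b $ (r,(((ha,sa),oa),((ib,sb),\<kappa>))) $ (ja,jb)"
      for r ha sa oa ib sb \<kappa> ja jb
    proof -
      let ?xa = "((ha,sa),oa)"
      let ?T = "Tk QA F Ks h a b"
      have "(adj Wg ** Wg ** ?T) $ (r,(?xa,((ib,sb),\<kappa>))) $ (ja,jb)
          = (\<Sum>ib'\<in>UNIV. \<Sum>sb'\<in>UNIV. \<Sum>\<kappa>'\<in>UNIV. (adj Wbig ** Wbig) $ ((ib,sb),\<kappa>) $ ((ib',sb'),\<kappa>') *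
               ?T $ (r,(?xa,((ib',sb'),\<kappa>'))) $ (ja,jb))"
        by (simp only: blockid_mult[OF WWg] sum_UNIV_prod)
      also have "\<dots> = (\<Sum>ib'\<in>UNIV. \<Sum>sb'\<in>UNIV. \<Sum>\<kappa>'\<in>UNIV. if sb' = sb then (if \<kappa>' = \<kappa> then
              (adj (Wb sb \<kappa>) ** Wb sb \<kappa>) $ ib $ ib' * ?T $ (r,(?xa,((ib',sb),\<kappa>))) $ (ja,jb) else 0) else 0)"
        by (intro sum.cong refl) (simp add: Bp)
      also have "\<dots> = (\<Sum>ib'\<in>UNIV. (adj (Wb sb \<kappa>) ** Wb sb \<kappa>) $ ib $ ib' * ?T $ (r,(?xa,((ib',sb),\<kappa>))) $ (ja,jb))"
        by (simp add: sum_collapse)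
      also have "\<dots> = ?T $ (r,(?xa,((ib,sb),\<kappa>))) $ (ja,jb)"
      proof (cases "(a,b) \<in> Ks \<and> sa = a \<and> sb = b \<and> r = h a b \<kappa>")
        case True
        have "(\<Sum>ib'\<in>UNIV. (adj (Wb sb \<kappa>) ** Wb sb \<kappa>) $ ib $ ib' * ?T $ (r,(?xa,((ib',sb),\<kappa>))) $ (ja,jb))
            = msqrt (QA a oa) $ ha $ ja * (adj (Wb b \<kappa>) ** Wb b \<kappa> ** msqrt (F b \<kappa>)) $ ib $ jb"
          using True by (auto simp: T_entry matrix_matrix_mult_def sum_distrib_left algebra_simps)
        then show ?thesis using True by (simp add: Wb(2) T_entry)
      next
        case False
        then show ?thesis by (auto simp: T_entry)
      qed
      finally show ?thesis .
    qed
    then show ?thesis by (simp add: vec_eq_iff split_paired_All)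
  qed
  define X where "X = G_map QA F Ks h \<rho>"
  have hrho: "hermitian \<rho>" using rho by (simp add: density_op_def psd_def)
  have hX: "hermitian X" unfolding X_def G_kraus
    by (intro sum_hermitian conj_hermitian hrho)
  have GX: "G_map QA QB Ks g' \<rho> = Wg ** X ** adj Wg"
    unfolding X_def G_kraus
    by (simp add: T1 adj_mult matrix_mult_sum_left matrix_mult_sum_right matrix_mul_assoc)
  have WX: "adj Wg ** Wg ** X = X"
  proof -
    have e: "adj Wg ** Wg ** (Tk QA F Ks h a b ** \<rho> ** adj (Tk QA F Ks h a b))
        = Tk QA F Ks h a b ** \<rho> ** adj (Tk QA F Ks h a b)" for a b
      by (simp add: matrix_mul_assoc T2)
    show ?thesis unfolding X_def G_kraus matrix_mult_sum_right e ..
  qed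
  have ZX: "Z_map (Wg ** X ** adj Wg) = Wg ** Z_map X ** adj Wg"
    by (rule Z_conj[OF Wg_entry])
  have WZX: "adj Wg ** Wg ** Z_map X = Z_map X"
    by (rule Z_fix[OF Wg_entry WX])
  have "rel_entropy (G_map QA QB Ks g' \<rho>) (Z_map (G_map QA QB Ks g' \<rho>)) = rel_entropy X (Z_map X)"
    unfolding GX ZX by (rule rel_entropy_conj[OF hX Z_hermitian[OF hX] WX WZX])
  then show ?thesis by (simp add: X_def QA_def QB_def g'_def)
qed


end
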